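(* Fix $\lambda\in[0,1]$. Suppose $(q_{i,j}^{(k)})_{i\ne j,\,k=\pm1}$ are real numbers with $q_{i,j}^{(k)}\in(0,1)$ for all indices, satisfying $$q_{i,j}^{(k)}=\lambda\Big[p_{i,j}^{(k)}+\sum_{m\neq i,j}p_{i,m}^{(k)}q_{m,j}^{(k)}+\sum_{m\neq i}p_{i,m}^{(-k)}q_{m,i}^{(-k)}q_{i,j}^{(k)}\Big]\quad\text{for all } i\ne j,\ k.$$ Then $q_{i,j}^{(k)}=R_{i,j}^{(k)}(\lambda)$ for all $i\neq j$, $k$.
   Context: Fix an integer $N\ge 3$. Let $\mathcal G_N$ be the groupoid with object set $\{1,\dots,N\}$ generated by arrows $A_{i,j}^{(k)}$, $i\neq j\in\{1,\dots,N\}$, $k\in\{-1,1\}$, with source $i$ and target $j$, subject to the relations $A_{i,j}^{(k)}A_{j,\ell}^{(k)}=A_{i,\ell}^{(k)}$ for all $i,j,\ell$, $k$, with the convention $A_{i,i}^{(k)}:=e_i$ (unit at object $i$). Let $\mathcal A$ be its arrow set. Let $\{W_n\}_{n\ge0}$ be the Markov chain on $\mathcal A$ with $P(W_{n+1}=y\mid W_n=x)=p_{i,j}^{(k)}$ if $x^{-1}y=A_{i,j}^{(k)}$ with $i\ne j$ and $0$ otherwise, where $p_{i,j}^{(k)}\in(0,1)$ and $\sum_{j\ne i}\sum_{k=\pm1}p_{i,j}^{(k)}=1$ for each $i$; $P_x,E_x$ denote law and expectation with $W_0=x$. For $x\in\mathcal A$ let $T(0,x)=\inf\{n\ge0:W_n=W_0x\}$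 (possibly $\infty$), and define $R_{i,j}^{(k)}(\lambda)=E_{e_i}[\lambda^{T(0,A_{i,j}^{(k)})}]=\sum_{n\ge0}P_{e_i}(T(0,A_{i,j}^{(k)})=n)\lambda^n$. *)

theory Defs
  imports Complex_Main
begin

text \<open>
  Concrete model of the groupoid G_N.  An arrow is represented by its reduced
  (normal form) word: a source object s together with a list of steps (k, v),
  meaning a factor A^{(k)}_{u,v} from the current object u to v.  In a reduced
  word consecutive labels k alternate and every step changes the object
  (v differs from the previous object).  Because of the relations
  A^{(k)}_{i,j} A^{(k)}_{j,l} = A^{(k)}_{i,l} (with A^{(k)}_{i,i} = e_i), every arrow
  has a unique such normal form.
\<close>

type_synonym arrow = "nat \<times> (int \<times> nat) list"

definition unit_arrow :: "nat \<Rightarrow> arrow" where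
  "unit_arrow i = (i, [])"

definition gen_arrow :: "nat \<Rightarrow> nat \<Rightarrow> int \<Rightarrow> arrow" where
  "gen_arrow i j k = (i, [(k, j)])"

definition tgt :: "arrow \<Rightarrow> nat" where
  "tgt x = (if snd x = [] then fst x else snd (last (snd x)))"

text \<open>Right multiplication of an arrow x (with target tgt x) by the generator
  A^{(k)}_{tgt x, j}, computed on normal forms.\<close>
definition rmul :: "arrow \<Rightarrow> int \<Rightarrow> nat \<Rightarrow> arrow" where
  "rmul x k j =
     (let s = fst x; ws = snd x in
      if ws = [] \<or> fst (last ws) \<noteq> k then (s, ws @ [(k, j)])
      else if tgt (s, butlast ws) = j then (s, butlast ws)
      else (s, butlast ws @ [(k, j)]))"

definition walk :: "arrow \<Rightarrow> (int \<times> nat) list \<Rightarrow> arrow" where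
  "walk x ss = foldl (\<lambda>y st. rmul y (fst st) (snd st)) x ss"

definition valid_steps :: "nat \<Rightarrow> arrow \<Rightarrow> nat \<Rightarrow> (int \<times> nat) list set" where
  "valid_steps N x n =
     {ss. length ss = n \<and>
          (\<forall>m<n. fst (ss ! m) \<in> {-1, 1} \<and> snd (ss ! m) \<in> {1..N} \<and>
                 snd (ss ! m) \<noteq> tgt (walk x (take m ss)))}"

definition path_prob :: "(nat \<Rightarrow> nat \<Rightarrow> int \<Rightarrow> real) \<Rightarrow> arrow \<Rightarrow> (int \<times> nat) list \<Rightarrow> real" where
  "path_prob p x ss =
     (\<Prod>m<length ss. p (tgt (walk x (take m ss))) (snd (ss ! m)) (fst (ss ! m)))"

definition first_hit_prob ::
  "nat \<Rightarrow> (nat \<Rightarrow> nat \<Rightarrow> int \<Rightarrow> real) \<Rightarrow> arrow \<Rightarrow> arrow \<Rightarrow> nat \<Rightarrow> real" where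
  "first_hit_prob N p x target n =
     (\<Sum>ss\<in>{ss \<in> valid_steps N x n. walk x ss = target \<and>
                                    (\<forall>m<n. walk x (take m ss) \<noteq> target)}.
        path_prob p x ss)"

text \<open>R^{(k)}_{i,j}(lambda) = E_{e_i}[lambda^{T(0, A^{(k)}_{i,j})}]
  = sum_n P_{e_i}(T(0,A^{(k)}_{i,j}) = n) lambda^n  (here W_0 = e_i, so W_0 A = A).\<close>
definition R_gf :: "nat \<Rightarrow> (nat \<Rightarrow> nat \<Rightarrow> int \<Rightarrow> real) \<Rightarrow> nat \<Rightarrow> nat \<Rightarrow> int \<Rightarrow> real \<Rightarrow> real" where
  "R_gf N p i j k lam =
     (\<Sum>n. first_hit_prob N p (unit_arrow i) (gen_arrow i j k) n * lam ^ n)"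

end

theory Submission
  imports Defs
begin


lemma tgt_rev: "tgt (i, rev rw) = (case rw of [] \<Rightarrow> i | st # _ \<Rightarrow> snd st)"
  by (cases rw) (auto simp: tgt_def)

lemma rmul_nil: "rmul (i, []) l v = (i, rev [(l, v)])"
  by (simp add: rmul_def)

lemma rmul_cons: "rmul (i, rev ((l0, v0) # r)) l v =
  (if l0 \<noteq> l then (i, rev ((l, v) # (l0, v0) # r))
   else if tgt (i, rev r) = v then (i, rev r) else (i, rev ((l, v) # r)))"
  by (simp add: rmul_def Let_def)

lemma walk_snoc: "walk x (ss @ [st]) = rmul (walk x ss) (fst st) (snd st)"
  by (simp add: walk_def)

lemma walk_nil: "walk x [] = x"
  by (simp add: walk_def)

lemma valid_zero: "valid_steps N x 0 = {[]}"
  by (auto simp: valid_steps_def)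

lemma valid_snoc: "ss @ [st] \<in> valid_steps N x (Suc n) \<longleftrightarrow>
   ss \<in> valid_steps N x n \<and> fst st \<in> {-1, 1} \<and> snd st \<in> {1..N} \<and> snd st \<noteq> tgt (walk x ss)"
proof
  assume A: "ss @ [st] \<in> valid_steps N x (Suc n)"
  hence "length (ss @ [st]) = Suc n" unfolding valid_steps_def by blast
  hence len: "length ss = n" by simp
  from A have B: "\<forall>m<Suc n. fst ((ss@[st]) ! m) \<in> {-1, 1} \<and> snd ((ss@[st]) ! m) \<in> {1..N} \<and>
                 snd ((ss@[st]) ! m) \<noteq> tgt (walk x (take m (ss@[st])))"
    unfolding valid_steps_def by blast
  have "\<forall>m<n. fst (ss ! m) \<in> {-1, 1} \<and> snd (ss ! m) \<in> {1..N} \<and>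
                 snd (ss ! m) \<noteq> tgt (walk x (take m ss))"
  proof (intro allI impI)
    fix m assume "m < n"
    with B[rule_format, of m] len show "fst (ss ! m) \<in> {-1, 1} \<and> snd (ss ! m) \<in> {1..N} \<and>
                 snd (ss ! m) \<noteq> tgt (walk x (take m ss))"
      by (simp add: nth_append)
  qed
  with len have "ss \<in> valid_steps N x n" unfolding valid_steps_def by blast
  moreover have "fst st \<in> {-1, 1} \<and> snd st \<in> {1..N} \<and> snd st \<noteq> tgt (walk x ss)"
  proof -
    have e1: "(ss@[st]) ! n = st" using len by (simp add: nth_append)
    have e2: "take n (ss@[st]) = ss" using len by simp
    show ?thesis using B[rule_format, of n] unfolding e1 e2 by simp
  qed
  ultimately show "ss \<in> valid_steps N x n \<and> fst st \<in> {-1, 1} \<and> snd st \<in> {1..N} \<and> snd st \<noteq> tgt (walk x ss)"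
    by blast
next
  assume A: "ss \<in> valid_steps N x n \<and> fst st \<in> {-1, 1} \<and> snd st \<in> {1..N} \<and> snd st \<noteq> tgt (walk x ss)"
  hence len: "length ss = n" by (simp add: valid_steps_def)
  have "\<forall>m<Suc n. fst ((ss@[st]) ! m) \<in> {-1, 1} \<and> snd ((ss@[st]) ! m) \<in> {1..N} \<and>
                 snd ((ss@[st]) ! m) \<noteq> tgt (walk x (take m (ss@[st])))"
  proof (intro allI impI)
    fix m assume m: "m < Suc n"
    show "fst ((ss@[st]) ! m) \<in> {-1, 1} \<and> snd ((ss@[st]) ! m) \<in> {1..N} \<and>
                 snd ((ss@[st]) ! m) \<noteq> tgt (walk x (take m (ss@[st])))"
    proof (cases "m < n")
      case True
      with A len show ?thesis by (simp add: nth_append valid_steps_def)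
    next
      case False
      with m have mn: "m = n" by simp
      have e1: "(ss@[st]) ! m = st" using len mn by (simp add: nth_append)
      have e2: "take m (ss@[st]) = ss" using len mn by simp
      show ?thesis using A unfolding e1 e2 by simp
    qed
  qed
  moreover have "length (ss @ [st]) = Suc n" using len by simp
  ultimately show "ss @ [st] \<in> valid_steps N x (Suc n)"
    unfolding valid_steps_def by blast
qed

lemma valid_len: "ss \<in> valid_steps N x n \<Longrightarrow> length ss = n"
  by (simp add: valid_steps_def)

lemma valid_Suc_cases:
  assumes "ss \<in> valid_steps N x (Suc n)"
  obtains ss' st where "ss = ss' @ [st]" "ss' \<in> valid_steps N x n" "fst st \<in> {-1, 1}"
    "snd st \<in> {1..N}" "snd st \<noteq> tgt (walk x ss')"
proof -
  have "length ss = Suc n" using assms by (simp add: valid_len)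
  hence "ss = butlast ss @ [last ss]"
    by (metis append_butlast_last_id list.size(3) nat.distinct(1))
  with assms valid_snoc[of "butlast ss" "last ss" N x n] that show ?thesis by metis
qed

lemma valid_finite: "finite (valid_steps N x n)"
proof -
  have "valid_steps N x n \<subseteq> {xs. set xs \<subseteq> ({-1,1} \<times> {1..N}) \<and> length xs = n}"
  proof
    fix xs assume A: "xs \<in> valid_steps N x n"
    have "set xs \<subseteq> ({-1,1} \<times> {1..N})"
    proof
      fix z assume "z \<in> set xs"
      then obtain m where "m < length xs" "xs ! m = z" by (auto simp: in_set_conv_nth)
      with A show "z \<in> {-1,1} \<times> {1..N}" unfolding valid_steps_def mem_Times_iff by auto
    qed
    with A show "xs \<in> {xs. set xs \<subseteq> ({-1,1} \<times> {1..N}) \<and> length xs = n}"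
      by (simp add: valid_steps_def)
  qed
  moreover have "finite {xs. set xs \<subseteq> ({-1::int,1} \<times> {1..N}) \<and> length xs = n}"
    by (intro finite_lists_length_eq) auto
  ultimately show ?thesis by (rule finite_subset)
qed

lemma valid_Suc_image: "valid_steps N x (Suc n) =
   (\<lambda>(ss, st). ss @ [st]) ` (SIGMA ss:valid_steps N x n. {-1, 1} \<times> ({1..N} - {tgt (walk x ss)}))"
proof
  show "valid_steps N x (Suc n) \<subseteq> (\<lambda>(ss, st). ss @ [st]) ` (SIGMA ss:valid_steps N x n. {-1, 1} \<times> ({1..N} - {tgt (walk x ss)}))"
  proof
    fix ss assume "ss \<in> valid_steps N x (Suc n)"
    then obtain ss' st where "ss = ss' @ [st]" "ss' \<in> valid_steps N x n" "fst st \<in> {-1, 1}"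
      "snd st \<in> {1..N}" "snd st \<noteq> tgt (walk x ss')" by (rule valid_Suc_cases)
    then show "ss \<in> (\<lambda>(ss, st). ss @ [st]) ` (SIGMA ss:valid_steps N x n. {-1, 1} \<times> ({1..N} - {tgt (walk x ss)}))"
      by (intro image_eqI[of _ _ "(ss', st)"]) (auto simp: mem_Times_iff)
  qed
next
  show "(\<lambda>(ss, st). ss @ [st]) ` (SIGMA ss:valid_steps N x n. {-1, 1} \<times> ({1..N} - {tgt (walk x ss)})) \<subseteq> valid_steps N x (Suc n)"
  proof
    fix z assume "z \<in> (\<lambda>(ss, st). ss @ [st]) ` (SIGMA ss:valid_steps N x n. {-1, 1} \<times> ({1..N} - {tgt (walk x ss)}))"
    then obtain ss st where "z = ss @ [st]" "ss \<in> valid_steps N x n" "st \<in> {-1, 1} \<times> ({1..N} - {tgt (walk x ss)})"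
      by auto
    then show "z \<in> valid_steps N x (Suc n)" using valid_snoc[of ss st N x n] by (auto simp: mem_Times_iff)
  qed
qed

lemma sum_ext:
  "(\<Sum>ss\<in>valid_steps N x (Suc n). g ss) =
   (\<Sum>ss\<in>valid_steps N x n. \<Sum>l\<in>{-1,1}. \<Sum>v\<in>{1..N} - {tgt (walk x ss)}. g (ss @ [(l, v)]))"
proof -
  have inj: "inj_on (\<lambda>(ss, st). ss @ [st]) (SIGMA ss:valid_steps N x n. {-1, 1} \<times> ({1..N} - {tgt (walk x ss)}))"
    by (auto simp: inj_on_def)
  have "(\<Sum>ss\<in>valid_steps N x (Suc n). g ss) =
     (\<Sum>(ss,st)\<in>(SIGMA ss:valid_steps N x n. {-1, 1} \<times> ({1..N} - {tgt (walk x ss)})). g (ss @ [st]))"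
    unfolding valid_Suc_image by (subst sum.reindex[OF inj]) (simp add: split_def)
  also have "\<dots> = (\<Sum>ss\<in>valid_steps N x n. \<Sum>st\<in>{-1, 1} \<times> ({1..N} - {tgt (walk x ss)}). g (ss @ [st]))"
    by (subst sum.Sigma) (auto simp: valid_finite)
  also have "\<dots> = (\<Sum>ss\<in>valid_steps N x n. \<Sum>l\<in>{-1,1}. \<Sum>v\<in>{1..N} - {tgt (walk x ss)}. g (ss @ [(l, v)]))"
    by (simp add: sum.cartesian_product)
  finally show ?thesis .
qed

lemma pp_snoc: "path_prob p x (ss @ [(l, v)]) = path_prob p x ss * p (tgt (walk x ss)) v l"
proof -
  have "path_prob p x (ss @ [(l, v)]) =
     (\<Prod>m<Suc (length ss). p (tgt (walk x (take m (ss@[(l,v)])))) (snd ((ss@[(l,v)]) ! m)) (fst ((ss@[(l,v)]) ! m)))"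
    by (simp add: path_prob_def)
  also have "\<dots> = (\<Prod>m<length ss. p (tgt (walk x (take m (ss@[(l,v)])))) (snd ((ss@[(l,v)]) ! m)) (fst ((ss@[(l,v)]) ! m)))
       * p (tgt (walk x ss)) v l"
    by (simp add: prod.lessThan_Suc)
  also have "(\<Prod>m<length ss. p (tgt (walk x (take m (ss@[(l,v)])))) (snd ((ss@[(l,v)]) ! m)) (fst ((ss@[(l,v)]) ! m)))
     = path_prob p x ss"
    unfolding path_prob_def by (intro prod.cong) (auto simp: nth_append)
  finally show ?thesis .
qed




fun hr :: "(nat \<Rightarrow> nat \<Rightarrow> int \<Rightarrow> real) \<Rightarrow> nat \<Rightarrow> nat \<Rightarrow> int \<Rightarrow> (int \<times> nat) list \<Rightarrow> real" where
  "hr q i j k [] = q i j k"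
| "hr q i j k [(l, v)] = (if l = k then (if v = j then 1 else q v j k) else q v i l * q i j k)"
| "hr q i j k ((l, v) # (l', v') # r) = q v v' l * hr q i j k ((l', v') # r)"

fun nfr :: "nat \<Rightarrow> nat \<Rightarrow> (int \<times> nat) list \<Rightarrow> bool" where
  "nfr N i [] = True"
| "nfr N i [(l, v)] = (l \<in> {-1, 1} \<and> v \<in> {1..N} \<and> v \<noteq> i)"
| "nfr N i ((l, v) # (l', v') # r) = (l \<in> {-1, 1} \<and> v \<in> {1..N} \<and> v \<noteq> v' \<and> l \<noteq> l' \<and> nfr N i ((l', v') # r))"

lemma sum_pm1: "k \<in> {-1, 1::int} \<Longrightarrow> (\<Sum>l\<in>{-1, 1}. g l) = g k + (g (-k) :: real)"
  by auto

lemma sum_if_one: "finite B \<Longrightarrow> j \<in> B \<Longrightarrow>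
   (\<Sum>v\<in>B. a v * (if v = j then 1 else f v)) = a j + (\<Sum>v\<in>B-{j}. a v * (f v :: real))"
  by (simp add: sum.remove)

lemma var_bound:
  fixes \<pi> Z :: "'a \<Rightarrow> real"
  assumes I: "finite I" and pos: "\<And>x. x \<in> I \<Longrightarrow> 0 \<le> \<pi> x" and s1: "(\<Sum>x\<in>I. \<pi> x) = 1"
    and s2: "(\<Sum>x\<in>I. \<pi> x * Z x) = h" and J: "J \<subseteq> I" and d: "\<And>x. x \<in> J \<Longrightarrow> d \<le> (Z x - h)^2"
  shows "h^2 + d * (\<Sum>x\<in>J. \<pi> x) \<le> (\<Sum>x\<in>I. \<pi> x * (Z x)^2)"
proof -
  have "(\<Sum>x\<in>I. \<pi> x * (Z x - h)^2) = (\<Sum>x\<in>I. \<pi> x * (Z x)^2) - 2 * h * (\<Sum>x\<in>I. \<pi> x * Z x) + h^2 * (\<Sum>x\<in>I. \<pi> x)"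
    by (simp add: power2_eq_square algebra_simps sum.distrib sum_subtractf sum_distrib_left)
  also have "\<dots> = (\<Sum>x\<in>I. \<pi> x * (Z x)^2) - h^2" using s1 s2 by (simp add: power2_eq_square)
  finally have e: "(\<Sum>x\<in>I. \<pi> x * (Z x - h)^2) = (\<Sum>x\<in>I. \<pi> x * (Z x)^2) - h^2" .
  have "d * (\<Sum>x\<in>J. \<pi> x) = (\<Sum>x\<in>J. \<pi> x * d)" by (simp add: sum_distrib_left mult.commute)
  also have "\<dots> \<le> (\<Sum>x\<in>J. \<pi> x * (Z x - h)^2)"
    using J pos d by (intro sum_mono mult_left_mono) auto
  also have "\<dots> \<le> (\<Sum>x\<in>I. \<pi> x * (Z x - h)^2)"
    using J pos I by (intro sum_mono2) auto
  finally show ?thesis using e by simp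
qed

lemma tgt_nil[simp]: "tgt (s, []) = s" by (simp add: tgt_def)
lemma tgt_snoc[simp]: "tgt (s, xs @ [a]) = snd a" by (simp add: tgt_def)

locale qsetup =
  fixes N :: nat and p q :: "nat \<Rightarrow> nat \<Rightarrow> int \<Rightarrow> real" and lam :: real and i j :: nat and k :: int
  assumes N3: "N \<ge> 3"
    and p_pos: "\<And>i j k. i \<in> {1..N} \<Longrightarrow> j \<in> {1..N} \<Longrightarrow> i \<noteq> j \<Longrightarrow> k \<in> {-1, 1} \<Longrightarrow>
                  0 < p i j k \<and> p i j k < 1"
    and p_sum: "\<And>i. i \<in> {1..N} \<Longrightarrow> (\<Sum>j\<in>{1..N} - {i}. \<Sum>k\<in>{-1, 1}. p i j k) = 1"
    and lam: "0 \<le> lam" "lam \<le> 1"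
    and q_pos: "\<And>i j k. i \<in> {1..N} \<Longrightarrow> j \<in> {1..N} \<Longrightarrow> i \<noteq> j \<Longrightarrow> k \<in> {-1, 1} \<Longrightarrow>
                  0 < q i j k \<and> q i j k < 1"
    and q_eq: "\<And>i j k. i \<in> {1..N} \<Longrightarrow> j \<in> {1..N} \<Longrightarrow> i \<noteq> j \<Longrightarrow> k \<in> {-1, 1} \<Longrightarrow>
                  q i j k = lam * (p i j k
                     + (\<Sum>m\<in>{1..N} - {i, j}. p i m k * q m j k)
                     + (\<Sum>m\<in>{1..N} - {i}. p i m (-k) * q m i (-k) * q i j k))"
    and iN: "i \<in> {1..N}" and jN: "j \<in> {1..N}" and ij: "i \<noteq> j" and k: "k \<in> {-1, 1}"
begin

definition H :: "nat \<times> (int \<times> nat) list \<Rightarrow> real" where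
  "H x = hr q i j k (rev (snd x))"

definition good :: "nat \<times> (int \<times> nat) list \<Rightarrow> bool" where
  "good x \<longleftrightarrow> fst x = i \<and> nfr N i (rev (snd x))"

abbreviation "tt \<equiv> (i, [(k, j)])"

lemma nfr_tgt: "tgt (i, rev rw) \<in> {1..N}" if "nfr N i rw"
proof (cases rw)
  case (Cons a r)
  then show ?thesis using that by (cases a; cases r) (auto simp: tgt_def)
qed (use iN in \<open>simp add: tgt_def\<close>)

lemma good_tgt: "good x \<Longrightarrow> tgt x \<in> {1..N}"
proof -
  assume g: "good x"
  obtain a b where x: "x = (a, b)" by (cases x)
  have "tgt (i, rev (rev b)) \<in> {1..N}" using g x by (intro nfr_tgt) (simp add: good_def)
  then show ?thesis using g x by (simp add: good_def)
qed

lemma hr_bounds: "nfr N i rw \<Longrightarrow> 0 < hr q i j k rw \<and> hr q i j k rw \<le> 1"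
proof (induction rw)
  case Nil
  then show ?case using q_pos[OF iN jN ij k] by simp
next
  case (Cons a r)
  obtain l v where a: "a = (l, v)" by (cases a)
  show ?case
  proof (cases r)
    case Nil
    with Cons.prems a have l: "l \<in> {-1,1}" and v: "v \<in> {1..N}" "v \<noteq> i" by auto
    show ?thesis
    proof (cases "l = k")
      case True
      then show ?thesis using a Nil q_pos[OF v(1) jN _ k] by auto
    next
      case False
      then show ?thesis using a Nil q_pos[OF v(1) iN v(2) l] q_pos[OF iN jN ij k]
        by (simp add: mult_le_one)
    qed
  next
    case (Cons b r')
    obtain l' v' where b: "b = (l', v')" by (cases b)
    from Cons.prems have pr: "nfr N i r" "l \<in> {-1,1}" "v \<in> {1..N}" "v \<noteq> v'" using a b Cons by auto
    have v': "v' \<in> {1..N}" using nfr_tgt[OF pr(1)] Cons b by (simp add: tgt_def)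
    have IH: "0 < hr q i j k r \<and> hr q i j k r \<le> 1" using Cons.IH pr(1) by blast
    show ?thesis using a b Cons IH q_pos[OF pr(3) v' pr(4) pr(2)] by (simp add: mult_le_one)
  qed
qed


lemma H_rev[simp]: "H (s, rev X) = hr q i j k X"
  by (simp add: H_def)

lemma H_single[simp]: "H (s, [a]) = hr q i j k [a]"
  by (simp add: H_def)

lemma H_nil[simp]: "H (s, []) = q i j k"
  by (simp add: H_def)

lemma harm_nil:
  "lam * (\<Sum>l\<in>{-1,1}. \<Sum>v\<in>{1..N}-{i}. p i v l * H (rmul (i, []) l v)) = q i j k"
proof -
  have kk: "-k \<noteq> k" using k by auto
  have B: "{1..N} - {i} - {j} = {1..N} - {i, j}" by auto
  have s1: "(\<Sum>v\<in>{1..N}-{i}. p i v k * H (rmul (i, []) l v)) = 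
      (\<Sum>v\<in>{1..N}-{i}. p i v k * (if v = j then 1 else q v j k))" if "l = k" for l
    using that by (intro sum.cong) (auto simp: rmul_def)
  also have "\<dots> = p i j k + (\<Sum>m\<in>{1..N} - {i} - {j}. p i m k * q m j k)"
    using jN ij by (subst sum_if_one) auto
  finally have s1': "(\<Sum>v\<in>{1..N}-{i}. p i v k * H (rmul (i, []) k v)) = p i j k + (\<Sum>m\<in>{1..N} - {i} - {j}. p i m k * q m j k)"
    by simp
  have s2: "(\<Sum>v\<in>{1..N}-{i}. p i v (-k) * H (rmul (i, []) (-k) v)) =
      (\<Sum>m\<in>{1..N}-{i}. p i m (-k) * q m i (-k) * q i j k)"
    using kk by (intro sum.cong) (auto simp: rmul_def)
  show ?thesis
    unfolding sum_pm1[OF k] s1' s2 using q_eq[OF iN jN ij k, folded B] by simp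
qed


lemma harm_single:
  assumes l0: "l0 \<in> {-1,1}" and v0: "v0 \<in> {1..N}" "v0 \<noteq> i" and nt: "\<not> (l0 = k \<and> v0 = j)"
  shows "lam * (\<Sum>l\<in>{-1,1}. \<Sum>v\<in>{1..N}-{v0}. p v0 v l * H (rmul (i, [(l0, v0)]) l v))
     = hr q i j k [(l0, v0)]"
proof -
  have ll: "-l0 \<noteq> l0" using l0 by auto
  have A: "H (rmul (i, [(l0, v0)]) l0 v) = (if v = i then q i j k else hr q i j k [(l0, v)])" for v
    by (simp add: rmul_def)
  have Bm: "H (rmul (i, [(l0, v0)]) (-l0) v) = q v v0 (-l0) * hr q i j k [(l0, v0)]" for v
    using ll by (simp add: rmul_def H_def)
  have s2: "(\<Sum>v\<in>{1..N}-{v0}. p v0 v (-l0) * H (rmul (i, [(l0, v0)]) (-l0) v)) =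
     (\<Sum>v\<in>{1..N}-{v0}. p v0 v (-l0) * q v v0 (-l0)) * hr q i j k [(l0, v0)]"
    unfolding Bm by (simp add: sum_distrib_right mult.assoc)
  show ?thesis
  proof (cases "l0 = k")
    case True
    with nt have v0j: "v0 \<noteq> j" by auto
    have Bs: "{1..N} - {v0} - {j} = {1..N} - {v0, j}" by auto
    have "(\<Sum>v\<in>{1..N}-{v0}. p v0 v l0 * H (rmul (i, [(l0, v0)]) l0 v)) =
       (\<Sum>v\<in>{1..N}-{v0}. p v0 v k * (if v = j then 1 else q v j k))"
      unfolding A using True ij by (intro sum.cong) auto
    also have "\<dots> = p v0 j k + (\<Sum>m\<in>{1..N} - {v0} - {j}. p v0 m k * q m j k)"
      using jN v0j by (subst sum_if_one) auto
    finally have s1: "(\<Sum>v\<in>{1..N}-{v0}. p v0 v l0 * H (rmul (i, [(l0, v0)]) l0 v)) =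
        p v0 j k + (\<Sum>m\<in>{1..N} - {v0} - {j}. p v0 m k * q m j k)" .
    have hv: "hr q i j k [(l0, v0)] = q v0 j k" using True v0j by simp
    have qe: "q v0 j k = lam * (p v0 j k + (\<Sum>m\<in>{1..N} - {v0} - {j}. p v0 m k * q m j k)
       + (\<Sum>m\<in>{1..N} - {v0}. p v0 m (-k) * q m v0 (-k)) * q v0 j k)"
      using q_eq[OF v0(1) jN v0j k, folded Bs] by (simp add: sum_distrib_right)
    show ?thesis unfolding sum_pm1[OF l0] s1 s2 hv using qe True by simp
  next
    case False
    have Bs: "{1..N} - {v0} - {i} = {1..N} - {v0, i}" by auto
    have hv: "hr q i j k [(l0, v0)] = q v0 i l0 * q i j k" using False by simp
    have "(\<Sum>v\<in>{1..N}-{v0}. p v0 v l0 * H (rmul (i, [(l0, v0)]) l0 v)) =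
       (\<Sum>v\<in>{1..N}-{v0}. p v0 v l0 * (if v = i then 1 else q v i l0)) * q i j k"
      unfolding A sum_distrib_right using False by (intro sum.cong) auto
    also have "\<dots> = (p v0 i l0 + (\<Sum>m\<in>{1..N} - {v0} - {i}. p v0 m l0 * q m i l0)) * q i j k"
      using iN v0 by (subst sum_if_one) auto
    finally have s1: "(\<Sum>v\<in>{1..N}-{v0}. p v0 v l0 * H (rmul (i, [(l0, v0)]) l0 v)) =
       (p v0 i l0 + (\<Sum>m\<in>{1..N} - {v0} - {i}. p v0 m l0 * q m i l0)) * q i j k" .
    have qe: "q v0 i l0 = lam * (p v0 i l0 + (\<Sum>m\<in>{1..N} - {v0} - {i}. p v0 m l0 * q m i l0)
       + (\<Sum>m\<in>{1..N} - {v0}. p v0 m (-l0) * q m v0 (-l0)) * q v0 i l0)"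
      using q_eq[OF v0(1) iN v0(2) l0, folded Bs] by (simp add: sum_distrib_right)
    show ?thesis unfolding sum_pm1[OF l0] s1 s2 hv
      by (subst qe) (simp add: algebra_simps)
  qed
qed


lemma harm_cons:
  assumes nf: "nfr N i ((l0, v0) # (l1, v1) # r)"
  shows "lam * (\<Sum>l\<in>{-1,1}. \<Sum>v\<in>{1..N}-{v0}. p v0 v l * H (rmul (i, rev ((l0, v0) # (l1, v1) # r)) l v))
     = hr q i j k ((l0, v0) # (l1, v1) # r)"
proof -
  from nf have l0: "l0 \<in> {-1,1}" and v0: "v0 \<in> {1..N}" and v01: "v0 \<noteq> v1" and l01: "l0 \<noteq> l1"
    and nft: "nfr N i ((l1, v1) # r)" by auto
  have v1: "v1 \<in> {1..N}" using nfr_tgt[OF nft] by (simp add: tgt_def)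
  define T where "T = hr q i j k ((l1, v1) # r)"
  have ll: "-l0 \<noteq> l0" using l0 by auto
  have A: "H (rmul (i, rev ((l0, v0) # (l1, v1) # r)) l0 v) = (if v = v1 then 1 else q v v1 l0) * T" for v
    unfolding rmul_cons by (simp add: H_def T_def)
  have Bm: "H (rmul (i, rev ((l0, v0) # (l1, v1) # r)) (-l0) v) = q v v0 (-l0) * (q v0 v1 l0 * T)" for v
    unfolding rmul_cons using ll by (simp add: H_def T_def)
  have s2: "(\<Sum>v\<in>{1..N}-{v0}. p v0 v (-l0) * H (rmul (i, rev ((l0, v0) # (l1, v1) # r)) (-l0) v)) =
     (\<Sum>v\<in>{1..N}-{v0}. p v0 v (-l0) * q v v0 (-l0)) * q v0 v1 l0 * T"
    unfolding Bm by (simp add: sum_distrib_right mult.assoc)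
  have Bs: "{1..N} - {v0} - {v1} = {1..N} - {v0, v1}" by auto
  have "(\<Sum>v\<in>{1..N}-{v0}. p v0 v l0 * H (rmul (i, rev ((l0, v0) # (l1, v1) # r)) l0 v)) =
     (\<Sum>v\<in>{1..N}-{v0}. p v0 v l0 * (if v = v1 then 1 else q v v1 l0)) * T"
    unfolding A sum_distrib_right by (intro sum.cong) auto
  also have "\<dots> = (p v0 v1 l0 + (\<Sum>m\<in>{1..N} - {v0} - {v1}. p v0 m l0 * q m v1 l0)) * T"
    using v1 v01 by (subst sum_if_one) auto
  finally have s1: "(\<Sum>v\<in>{1..N}-{v0}. p v0 v l0 * H (rmul (i, rev ((l0, v0) # (l1, v1) # r)) l0 v)) =
     (p v0 v1 l0 + (\<Sum>m\<in>{1..N} - {v0} - {v1}. p v0 m l0 * q m v1 l0)) * T" .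
  have qe: "q v0 v1 l0 = lam * (p v0 v1 l0 + (\<Sum>m\<in>{1..N} - {v0} - {v1}. p v0 m l0 * q m v1 l0)
       + (\<Sum>m\<in>{1..N} - {v0}. p v0 m (-l0) * q m v0 (-l0)) * q v0 v1 l0)"
    using q_eq[OF v0 v1 v01 l0, folded Bs] by (simp add: sum_distrib_right)
  have hv: "hr q i j k ((l0, v0) # (l1, v1) # r) = q v0 v1 l0 * T" by (simp add: T_def)
  show ?thesis unfolding sum_pm1[OF l0] s1 s2 hv
    by (subst qe) (simp add: algebra_simps)
qed


lemma good_repr:
  assumes "good x"
  obtains rw where "x = (i, rev rw)" "nfr N i rw"
proof -
  obtain a b where x: "x = (a, b)" by (cases x)
  with assms have "a = i" "nfr N i (rev b)" by (auto simp: good_def)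
  with x that[of "rev b"] show ?thesis by simp
qed

lemma good_iff: "good (i, rev rw) \<longleftrightarrow> nfr N i rw"
  by (simp add: good_def)

lemma harmonic:
  assumes g: "good x" and nt: "x \<noteq> tt"
  shows "lam * (\<Sum>l\<in>{-1,1}. \<Sum>v\<in>{1..N}-{tgt x}. p (tgt x) v l * H (rmul x l v)) = H x"
proof -
  obtain rw where x: "x = (i, rev rw)" and nf: "nfr N i rw" using g by (rule good_repr)
  show ?thesis
  proof (cases rw)
    case Nil
    then show ?thesis using x harm_nil by simp
  next
    case (Cons a r)
    obtain l0 v0 where a: "a = (l0, v0)" by (cases a)
    show ?thesis
    proof (cases r)
      case Nil
      have "x = (i, [(l0, v0)])" using x Cons a Nil by simp
      moreover have "l0 \<in> {-1,1}" "v0 \<in> {1..N}" "v0 \<noteq> i" using nf Cons a Nil by auto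
      moreover have "\<not> (l0 = k \<and> v0 = j)" using nt x Cons a Nil by auto
      ultimately show ?thesis using harm_single by (simp add: tgt_def)
    next
      case (Cons b r')
      obtain l1 v1 where b: "b = (l1, v1)" by (cases b)
      have rw: "rw = (l0, v0) # (l1, v1) # r'" using Cons \<open>rw = a # r\<close> a b by simp
      have t: "tgt x = v0" using x rw by (simp add: tgt_def)
      show ?thesis unfolding t unfolding x rw
        using harm_cons[of l0 v0 l1 v1 r'] nf rw by (simp only: H_rev)
    qed
  qed
qed

lemma good_rmul:
  assumes g: "good x" and l: "l \<in> {-1,1}" and v: "v \<in> {1..N}" "v \<noteq> tgt x"
  shows "good (rmul x l v)"
proof -
  obtain rw where x: "x = (i, rev rw)" and nf: "nfr N i rw" using g by (rule good_repr)
  show ?thesis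
  proof (cases rw)
    case Nil
    then show ?thesis using x l v by (simp add: rmul_def good_def)
  next
    case (Cons a r)
    obtain l0 v0 where a: "a = (l0, v0)" by (cases a)
    have tv: "v \<noteq> v0" using v x Cons a by (simp add: tgt_def)
    have nfr_r: "nfr N i r" using nf Cons a by (cases r) auto
    have r1: "nfr N i ((l, v) # r)" if "l = l0" and "v \<noteq> tgt (i, rev r)"
    proof (cases r)
      case Nil
      then show ?thesis using that l v by simp
    next
      case (Cons b r')
      obtain l1 v1 where b: "b = (l1, v1)" by (cases b)
      have "l0 \<noteq> l1" using nf \<open>rw = a # r\<close> a Cons b by simp
      then show ?thesis using that l v nfr_r Cons b by (simp add: tgt_def)
    qed
    have r2: "nfr N i ((l, v) # (l0, v0) # r)" if "l0 \<noteq> l"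
      using that l v tv nf Cons a by auto
    show ?thesis unfolding x Cons a rmul_cons using r1 r2 nfr_r by (auto simp: good_def)
  qed
qed

lemma away:
  assumes g: "good x"
  obtains la where "la \<in> {-1,1}" "\<And>v. H (rmul x la v) = q v (tgt x) la * H x"
proof -
  obtain rw where x: "x = (i, rev rw)" and nf: "nfr N i rw" using g by (rule good_repr)
  show ?thesis
  proof (cases rw)
    case Nil
    have kk: "-k \<noteq> k" using k by auto
    have "H (rmul x (-k) v) = q v (tgt x) (-k) * H x" for v
      using x Nil kk by (simp add: rmul_def H_def)
    moreover have "-k \<in> {-1,1}" using k by auto
    ultimately show ?thesis using that by blast
  next
    case (Cons a r)
    obtain l0 v0 where a: "a = (l0, v0)" by (cases a)
    have l0: "l0 \<in> {-1,1}" using nf Cons a by (cases r) auto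
    have ll: "l0 \<noteq> -l0" using l0 by auto
    have "H (rmul x (-l0) v) = q v (tgt x) (-l0) * H x" for v
      unfolding x Cons a rmul_cons using ll by (simp add: H_def tgt_def)
    moreover have "-l0 \<in> {-1,1}" using l0 by auto
    ultimately show ?thesis using that by blast
  qed
qed


definition cmax :: real where
  "cmax = Max ((\<lambda>(a, b, l). q a b l) ` (SIGMA a:{1..N}. ({1..N} - {a}) \<times> {-1, 1}))"

definition dmin :: real where
  "dmin = Min ((\<lambda>(a, l). \<Sum>v\<in>{1..N} - {a}. p a v l) ` ({1..N} \<times> {-1, 1}))"

definition kappa :: real where "kappa = dmin * (1 - cmax)^2"

lemma cmax_ge: "a \<in> {1..N} \<Longrightarrow> b \<in> {1..N} \<Longrightarrow> a \<noteq> b \<Longrightarrow> l \<in> {-1,1} \<Longrightarrow> q a b l \<le> cmax"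
proof -
  assume a: "a \<in> {1..N}" "b \<in> {1..N}" "a \<noteq> b" "l \<in> {-1,1}"
  have m: "(a, b, l) \<in> (SIGMA a:{1..N}. ({1..N} - {a}) \<times> {-1, 1})" using a by auto
  have "q a b l \<in> (\<lambda>(a, b, l). q a b l) ` (SIGMA a:{1..N}. ({1..N} - {a}) \<times> {-1, 1})"
    using imageI[OF m, of "\<lambda>(a, b, l). q a b l"] by simp
  then show ?thesis unfolding cmax_def by (intro Max_ge finite_imageI finite_SigmaI) auto
qed

lemma cmax_lt: "cmax < 1"
proof -
  have fin: "finite ((\<lambda>(a, b, l). q a b l) ` (SIGMA a:{1..N}. ({1..N} - {a}) \<times> {-1, 1}))"
    by (intro finite_imageI finite_SigmaI) auto
  have ne: "(SIGMA a:{1..N}. ({1..N} - {a}) \<times> {-1::int, 1}) \<noteq> {}"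
  proof -
    have "(1, 2, 1) \<in> (SIGMA a:{1..N}. ({1..N} - {a}) \<times> {-1::int, 1})" using N3 by auto
    then show ?thesis by blast
  qed
  have "cmax \<in> (\<lambda>(a, b, l). q a b l) ` (SIGMA a:{1..N}. ({1..N} - {a}) \<times> {-1, 1})"
    unfolding cmax_def using fin ne by (intro Max_in) auto
  then obtain z where z: "z \<in> (SIGMA a:{1..N}. ({1..N} - {a}) \<times> {-1, 1})" "cmax = (\<lambda>(a, b, l). q a b l) z"
    by (rule imageE)
  obtain a b l where zz: "z = (a, b, l)" by (cases z)
  show ?thesis using z q_pos[of a b l] unfolding zz by auto
qed

lemma dmin_le: "a \<in> {1..N} \<Longrightarrow> l \<in> {-1,1} \<Longrightarrow> dmin \<le> (\<Sum>v\<in>{1..N} - {a}. p a v l)"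
proof -
  assume a: "a \<in> {1..N}" "l \<in> {-1,1}"
  have m: "(a, l) \<in> {1..N} \<times> {-1::int, 1}" using a by auto
  have "(\<Sum>v\<in>{1..N} - {a}. p a v l) \<in> (\<lambda>(a, l). \<Sum>v\<in>{1..N} - {a}. p a v l) ` ({1..N} \<times> {-1, 1})"
    using imageI[OF m, of "\<lambda>(a, l). \<Sum>v\<in>{1..N} - {a}. p a v l"] by simp
  then show ?thesis unfolding dmin_def by (intro Min_le) auto
qed

lemma dmin_pos: "0 < dmin"
proof -
  have fin: "finite ((\<lambda>(a, l). \<Sum>v\<in>{1..N} - {a}. p a v l) ` ({1..N} \<times> {-1::int, 1}))" by auto
  have ne: "({1..N} \<times> {-1::int, 1}) \<noteq> {}" using N3 by auto
  have "dmin \<in> (\<lambda>(a, l). \<Sum>v\<in>{1..N} - {a}. p a v l) ` ({1..N} \<times> {-1, 1})"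
    unfolding dmin_def using fin ne by (intro Min_in) auto
  then obtain z where z: "z \<in> {1..N} \<times> {-1::int, 1}" "dmin = (\<lambda>(a, l). \<Sum>v\<in>{1..N} - {a}. p a v l) z"
    by (rule imageE)
  obtain a l where zz: "z = (a, l)" by (cases z)
  have a: "a \<in> {1..N}" and l: "l \<in> {-1,1::int}" and d: "dmin = (\<Sum>v\<in>{1..N} - {a}. p a v l)"
    using z unfolding zz by auto
  have ne2: "{1..N} - {a} \<noteq> {}"
  proof
    assume "{1..N} - {a} = {}"
    hence "{1..N} \<subseteq> {a}" by auto
    hence "card {1..N} \<le> card {a}" by (intro card_mono) auto
    then show False using N3 by simp
  qed
  have "0 < (\<Sum>v\<in>{1..N} - {a}. p a v l)"
    using a l ne2 by (intro sum_pos) (auto intro!: p_pos[THEN conjunct1])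
  then show ?thesis using d by simp
qed

lemma kappa_pos: "0 < kappa"
  unfolding kappa_def using dmin_pos cmax_lt by simp

lemma H_bounds: "good x \<Longrightarrow> 0 < H x \<and> H x \<le> 1"
  using hr_bounds by (auto simp: H_def good_def)

lemma var_step:
  assumes g: "good x" and nt: "x \<noteq> tt"
  shows "(1 + kappa) * (H x)^2 \<le> (\<Sum>l\<in>{-1,1}. \<Sum>v\<in>{1..N}-{tgt x}. p (tgt x) v l * (lam * H (rmul x l v))^2)"
proof -
  define t where "t = tgt x"
  have tN: "t \<in> {1..N}" using good_tgt[OF g] by (simp add: t_def)
  define I where "I = {-1, 1::int} \<times> ({1..N} - {t})"
  obtain la where la: "la \<in> {-1,1}" and hla: "\<And>v. H (rmul x la v) = q v t la * H x"
    using away[OF g] unfolding t_def by blast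
  define J where "J = {la} \<times> ({1..N} - {t})"
  define h where "h = H x"
  have h01: "0 \<le> h" "h \<le> 1" using H_bounds[OF g] by (auto simp: h_def)
  have cart: "(\<Sum>l\<in>{-1,1}. \<Sum>v\<in>{1..N}-{t}. f l v) = (\<Sum>z\<in>I. f (fst z) (snd z))" for f :: "int \<Rightarrow> nat \<Rightarrow> real"
    unfolding I_def sum.cartesian_product by (rule sum.cong) auto
  have "h^2 + ((1 - cmax) * h)^2 * (\<Sum>z\<in>J. p t (snd z) (fst z)) \<le>
        (\<Sum>z\<in>I. p t (snd z) (fst z) * (lam * H (rmul x (fst z) (snd z)))^2)"
  proof (rule var_bound)
    show "finite I" unfolding I_def by auto
    show "0 \<le> p t (snd z) (fst z)" if "z \<in> I" for z
      using that tN p_pos[of t "snd z" "fst z"] unfolding I_def by (cases z) auto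
    have "(\<Sum>z\<in>I. p t (snd z) (fst z)) = (\<Sum>l\<in>{-1,1}. \<Sum>v\<in>{1..N}-{t}. p t v l)"
      using cart[of "\<lambda>l v. p t v l"] by simp
    also have "\<dots> = (\<Sum>v\<in>{1..N}-{t}. \<Sum>l\<in>{-1,1}. p t v l)" by (rule sum.swap)
    also have "\<dots> = 1" using p_sum[OF tN] .
    finally show "(\<Sum>z\<in>I. p t (snd z) (fst z)) = 1" .
    have "(\<Sum>z\<in>I. p t (snd z) (fst z) * (lam * H (rmul x (fst z) (snd z)))) =
        lam * (\<Sum>l\<in>{-1,1}. \<Sum>v\<in>{1..N}-{t}. p t v l * H (rmul x l v))"
      using cart[of "\<lambda>l v. p t v l * H (rmul x l v)"] by (simp add: sum_distrib_left algebra_simps)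
    also have "\<dots> = h" using harmonic[OF g nt] by (simp add: t_def h_def)
    finally show "(\<Sum>z\<in>I. p t (snd z) (fst z) * (lam * H (rmul x (fst z) (snd z)))) = h" .
    show "J \<subseteq> I" unfolding J_def I_def using la by auto
    show "((1 - cmax) * h)^2 \<le> (lam * H (rmul x (fst z) (snd z)) - h)^2" if "z \<in> J" for z
    proof -
      define v where "v = snd z"
      have z: "z = (la, v)" and v: "v \<in> {1..N}" "v \<noteq> t" using that unfolding J_def v_def by auto
      have qv: "0 < q v t la" "q v t la \<le> cmax" using q_pos[OF v(1) tN v(2) la] cmax_ge[OF v(1) tN v(2) la] by auto
      have "lam * q v t la \<le> q v t la" using qv lam by (intro mult_left_le_one_le) auto
      hence lq: "lam * q v t la \<le> cmax" using qv by linarith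
      have a1: "0 \<le> (1 - cmax) * h" using h01 cmax_lt by simp
      have "lam * q v t la * h \<le> cmax * h" using lq h01(1) by (rule mult_right_mono)
      moreover have "(1 - cmax) * h = h - cmax * h" by (simp add: left_diff_distrib)
      ultimately have a2: "(1 - cmax) * h \<le> h - lam * q v t la * h" by linarith
      note a = a1 a2
      have "((1 - cmax) * h)^2 \<le> (h - lam * q v t la * h)^2"
        using a by (intro power_mono) auto
      also have "\<dots> = (lam * H (rmul x (fst z) (snd z)) - h)^2"
        unfolding z by (simp add: hla h_def power2_commute algebra_simps)
      finally show ?thesis .
    qed
  qed
  moreover have "dmin \<le> (\<Sum>z\<in>J. p t (snd z) (fst z))"
  proof -
    have "(\<Sum>z\<in>J. p t (snd z) (fst z)) = (\<Sum>v\<in>{1..N} - {t}. p t v la)"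
    proof -
      have "J = Pair la ` ({1..N} - {t})" unfolding J_def by auto
      then show ?thesis by (simp add: sum.reindex inj_on_def)
    qed
    then show ?thesis using dmin_le[OF tN la] by simp
  qed
  ultimately have "h^2 + ((1 - cmax) * h)^2 * dmin \<le>
        (\<Sum>z\<in>I. p t (snd z) (fst z) * (lam * H (rmul x (fst z) (snd z)))^2)"
    by (smt (verit) mult_left_mono zero_le_power2)
  moreover have "(\<Sum>z\<in>I. p t (snd z) (fst z) * (lam * H (rmul x (fst z) (snd z)))^2) =
      (\<Sum>l\<in>{-1,1}. \<Sum>v\<in>{1..N}-{t}. p t v l * (lam * H (rmul x l v))^2)"
    using cart[of "\<lambda>l v. p t v l * (lam * H (rmul x l v))^2"] by simp
  ultimately show ?thesis unfolding kappa_def t_def h_def by (simp add: algebra_simps power2_eq_square)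
qed

end



context qsetup begin

abbreviation "x0 \<equiv> (i, [] :: (int \<times> nat) list)"
abbreviation "VV n \<equiv> valid_steps N x0 n"
abbreviation "W ss \<equiv> walk x0 ss"
abbreviation "pp ss \<equiv> path_prob p x0 ss"

definition nh :: "nat \<Rightarrow> (int \<times> nat) list \<Rightarrow> bool" where
  "nh n ss \<longleftrightarrow> (\<forall>m<Suc n. W (take m ss) \<noteq> tt)"

definition Sg :: "(nat \<times> (int \<times> nat) list \<Rightarrow> real) \<Rightarrow> nat \<Rightarrow> real" where
  "Sg G n = (\<Sum>ss\<in>VV n. if nh n ss then pp ss * G (W ss) else 0)"

abbreviation "ff n \<equiv> first_hit_prob N p x0 tt n"

lemma walk_good: "ss \<in> VV n \<Longrightarrow> good (W ss) \<and> 0 \<le> pp ss"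
proof (induction n arbitrary: ss)
  case 0
  then have "ss = []" by (simp add: valid_zero)
  then show ?case by (simp add: walk_nil good_def path_prob_def)
next
  case (Suc n)
  from Suc.prems obtain ss' st where ss: "ss = ss' @ [st]" "ss' \<in> VV n" "fst st \<in> {-1, 1}"
    "snd st \<in> {1..N}" "snd st \<noteq> tgt (W ss')" by (rule valid_Suc_cases)
  obtain l v where st: "st = (l, v)" by (cases st)
  have IH: "good (W ss')" "0 \<le> pp ss'" using Suc.IH[OF ss(2)] by auto
  have "good (W ss)" unfolding ss walk_snoc using good_rmul[OF IH(1)] ss by auto
  moreover have "0 \<le> pp ss" unfolding ss st pp_snoc
    using IH(2) p_pos[of "tgt (W ss')" v l] good_tgt[OF IH(1)] ss st by auto
  ultimately show ?case by simp
qed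

lemma ff_nonneg: "0 \<le> ff n"
  unfolding first_hit_prob_def using walk_good by (intro sum_nonneg) auto

lemma ff_sum: "ff (Suc n) = (\<Sum>ss\<in>VV (Suc n). if nh n ss \<and> W ss = tt then pp ss else 0)"
  unfolding first_hit_prob_def nh_def
  by (subst sum.inter_filter[symmetric]) (auto simp: valid_finite intro!: sum.cong)

lemma nh_Suc: "ss \<in> VV (Suc n) \<Longrightarrow> nh (Suc n) ss \<longleftrightarrow> nh n ss \<and> W ss \<noteq> tt"
proof -
  assume "ss \<in> VV (Suc n)"
  hence "take (Suc n) ss = ss" using valid_len by fastforce
  then show ?thesis unfolding nh_def by (metis less_Suc_eq)
qed

lemma nh_snoc: "ss \<in> VV n \<Longrightarrow> nh n (ss @ [st]) \<longleftrightarrow> nh n ss"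
proof -
  assume "ss \<in> VV n"
  hence len: "length ss = n" by (rule valid_len)
  have "take m (ss @ [st]) = take m ss" if "m < Suc n" for m
    using that len by simp
  then show ?thesis unfolding nh_def by auto
qed

lemma key_step:
  "(\<Sum>ss\<in>VV n. if nh n ss then pp ss * (\<Sum>l\<in>{-1,1}. \<Sum>v\<in>{1..N}-{tgt (W ss)}. p (tgt (W ss)) v l * G (rmul (W ss) l v)) else 0)
   = Sg G (Suc n) + ff (Suc n) * G tt"
proof -
  have "Sg G (Suc n) + ff (Suc n) * G tt = (\<Sum>ss\<in>VV (Suc n). if nh n ss then pp ss * G (W ss) else 0)"
    unfolding Sg_def ff_sum sum_distrib_right sum.distrib[symmetric]
    by (intro sum.cong) (auto simp: nh_Suc)
  also have "\<dots> = (\<Sum>ss\<in>VV n. \<Sum>l\<in>{-1,1}. \<Sum>v\<in>{1..N} - {tgt (W ss)}.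
       if nh n ss then pp ss * (p (tgt (W ss)) v l * G (rmul (W ss) l v)) else 0)"
    unfolding sum_ext using nh_snoc
    by (intro sum.cong refl) (simp add: nh_snoc pp_snoc walk_snoc)
  also have "\<dots> = (\<Sum>ss\<in>VV n. if nh n ss then pp ss * (\<Sum>l\<in>{-1,1}. \<Sum>v\<in>{1..N}-{tgt (W ss)}. p (tgt (W ss)) v l * G (rmul (W ss) l v)) else 0)"
    by (intro sum.cong refl) (simp add: sum_distrib_left distrib_left)
  finally show ?thesis by simp
qed


definition SS :: "nat \<Rightarrow> real" where "SS n = Sg (\<lambda>y. lam^n * H y) n"
definition QQ :: "nat \<Rightarrow> real" where "QQ n = Sg (\<lambda>y. (lam^n * H y)^2) n"
definition PP :: "nat \<Rightarrow> real" where "PP n = Sg (\<lambda>y. 1) n"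

lemma nh_last: "ss \<in> VV n \<Longrightarrow> nh n ss \<Longrightarrow> W ss \<noteq> tt"
proof -
  assume a: "ss \<in> VV n" "nh n ss"
  hence "take n ss = ss" using valid_len by fastforce
  with a(2) show ?thesis unfolding nh_def by (metis lessI)
qed

lemma H_tt: "H tt = 1" by simp

lemma S_step: "SS n = SS (Suc n) + ff (Suc n) * lam^(Suc n)"
proof -
  have "SS n = (\<Sum>ss\<in>VV n. if nh n ss then pp ss * (\<Sum>l\<in>{-1,1}. \<Sum>v\<in>{1..N}-{tgt (W ss)}.
            p (tgt (W ss)) v l * (lam^(Suc n) * H (rmul (W ss) l v))) else 0)"
    unfolding SS_def Sg_def
  proof (intro sum.cong refl)
    fix ss assume ss: "ss \<in> VV n"
    show "(if nh n ss then pp ss * (lam ^ n * H (W ss)) else 0) =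
        (if nh n ss then pp ss * (\<Sum>l\<in>{-1,1}. \<Sum>v\<in>{1..N}-{tgt (W ss)}.
            p (tgt (W ss)) v l * (lam^(Suc n) * H (rmul (W ss) l v))) else 0)"
    proof (cases "nh n ss")
      case True
      have g: "good (W ss)" using walk_good[OF ss] by simp
      have nt: "W ss \<noteq> tt" using nh_last[OF ss True] .
      have "(\<Sum>l\<in>{-1,1}. \<Sum>v\<in>{1..N}-{tgt (W ss)}. p (tgt (W ss)) v l * (lam^(Suc n) * H (rmul (W ss) l v)))
          = lam^n * (lam * (\<Sum>l\<in>{-1,1}. \<Sum>v\<in>{1..N}-{tgt (W ss)}. p (tgt (W ss)) v l * H (rmul (W ss) l v)))"
        by (simp add: sum_distrib_left algebra_simps)
      also have "\<dots> = lam^n * H (W ss)" using harmonic[OF g nt] by simp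
      finally show ?thesis using True by simp
    qed simp
  qed
  also have "\<dots> = SS (Suc n) + ff (Suc n) * lam^(Suc n)"
    using key_step[of n "\<lambda>y. lam^(Suc n) * H y"] unfolding SS_def by simp
  finally show ?thesis .
qed

lemma Q_step: "(1 + kappa) * QQ n \<le> QQ (Suc n) + ff (Suc n) * (lam^(Suc n))^2"
proof -
  have "(1 + kappa) * QQ n = (\<Sum>ss\<in>VV n. if nh n ss then pp ss * ((1 + kappa) * (lam^n * H (W ss))^2) else 0)"
    unfolding QQ_def Sg_def sum_distrib_left by (intro sum.cong refl) (simp add: algebra_simps)
  also have "\<dots> \<le> (\<Sum>ss\<in>VV n. if nh n ss then pp ss * (\<Sum>l\<in>{-1,1}. \<Sum>v\<in>{1..N}-{tgt (W ss)}.
            p (tgt (W ss)) v l * (lam^(Suc n) * H (rmul (W ss) l v))^2) else 0)"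
  proof (intro sum_mono)
    fix ss assume ss: "ss \<in> VV n"
    show "(if nh n ss then pp ss * ((1 + kappa) * (lam^n * H (W ss))^2) else 0) \<le>
        (if nh n ss then pp ss * (\<Sum>l\<in>{-1,1}. \<Sum>v\<in>{1..N}-{tgt (W ss)}.
            p (tgt (W ss)) v l * (lam^(Suc n) * H (rmul (W ss) l v))^2) else 0)"
    proof (cases "nh n ss")
      case True
      have g: "good (W ss)" and pp0: "0 \<le> pp ss" using walk_good[OF ss] by auto
      have nt: "W ss \<noteq> tt" using nh_last[OF ss True] .
      have "(1 + kappa) * (lam^n * H (W ss))^2 = (lam^n)^2 * ((1 + kappa) * (H (W ss))^2)"
        by (simp add: power_mult_distrib)
      also have "\<dots> \<le> (lam^n)^2 * (\<Sum>l\<in>{-1,1}. \<Sum>v\<in>{1..N}-{tgt (W ss)}. p (tgt (W ss)) v l * (lam * H (rmul (W ss) l v))^2)"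
        using var_step[OF g nt] by (intro mult_left_mono) auto
      also have "\<dots> = (\<Sum>l\<in>{-1,1}. \<Sum>v\<in>{1..N}-{tgt (W ss)}. p (tgt (W ss)) v l * (lam^(Suc n) * H (rmul (W ss) l v))^2)"
        by (simp add: sum_distrib_left power_mult_distrib algebra_simps)
      finally show ?thesis using True pp0 by (simp add: mult_left_mono)
    qed simp
  qed
  also have "\<dots> = QQ (Suc n) + ff (Suc n) * (lam^(Suc n))^2"
    using key_step[of n "\<lambda>y. (lam^(Suc n) * H y)^2"] unfolding QQ_def by simp
  finally show ?thesis .
qed

lemma P_step: "PP n = PP (Suc n) + ff (Suc n)"
proof -
  have "PP n = (\<Sum>ss\<in>VV n. if nh n ss then pp ss * (\<Sum>l\<in>{-1,1}. \<Sum>v\<in>{1..N}-{tgt (W ss)}.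
            p (tgt (W ss)) v l * 1) else 0)"
    unfolding PP_def Sg_def
  proof (intro sum.cong refl)
    fix ss assume ss: "ss \<in> VV n"
    have tN: "tgt (W ss) \<in> {1..N}" using walk_good[OF ss] good_tgt by auto
    have "(\<Sum>l\<in>{-1,1}. \<Sum>v\<in>{1..N}-{tgt (W ss)}. p (tgt (W ss)) v l * 1) = 1"
      using p_sum[OF tN] by (simp add: sum.distrib)
    then show "(if nh n ss then pp ss * 1 else 0) = (if nh n ss then pp ss * (\<Sum>l\<in>{-1,1}. \<Sum>v\<in>{1..N}-{tgt (W ss)}.
            p (tgt (W ss)) v l * 1) else 0)" by simp
  qed
  also have "\<dots> = PP (Suc n) + ff (Suc n)"
    using key_step[of n "\<lambda>y. 1"] unfolding PP_def by simp
  finally show ?thesis .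
qed


lemma term_bounds:
  assumes "ss \<in> VV n"
  shows "0 \<le> pp ss" "0 \<le> lam^n * H (W ss)" "lam^n * H (W ss) \<le> 1"
proof -
  have g: "good (W ss)" and "0 \<le> pp ss" using walk_good[OF assms] by auto
  then show "0 \<le> pp ss" by simp
  have h: "0 \<le> H (W ss)" "H (W ss) \<le> 1" using H_bounds[OF g] by auto
  have l: "0 \<le> lam^n" "lam^n \<le> 1" using lam by (auto intro: power_le_one)
  show "0 \<le> lam^n * H (W ss)" using h l by simp
  show "lam^n * H (W ss) \<le> 1" using h l by (simp add: mult_le_one)
qed

lemma SS_nonneg: "0 \<le> SS n"
  unfolding SS_def Sg_def using term_bounds by (intro sum_nonneg) auto

lemma QQ_nonneg: "0 \<le> QQ n"
  unfolding QQ_def Sg_def using term_bounds by (intro sum_nonneg) auto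

lemma PP_nonneg: "0 \<le> PP n"
  unfolding PP_def Sg_def using term_bounds by (intro sum_nonneg) auto

lemma x0_ne: "x0 \<noteq> tt" by simp

lemma nh0: "nh 0 []" unfolding nh_def by (simp add: walk_nil)

lemma SS0: "SS 0 = q i j k"
  unfolding SS_def Sg_def valid_zero using nh0 by (simp add: walk_nil path_prob_def)

lemma PP0: "PP 0 = 1"
  unfolding PP_def Sg_def valid_zero using nh0 by (simp add: walk_nil path_prob_def)

lemma ff0: "ff 0 = 0"
proof -
  have "{ss \<in> VV 0. W ss = tt \<and> (\<forall>m<0. W (take m ss) \<noteq> tt)} = {}"
    by (auto simp: valid_zero walk_nil)
  then show ?thesis unfolding first_hit_prob_def by (simp only: sum.empty)
qed

lemma sumS: "q i j k = (\<Sum>m<Suc n. ff m * lam^m) + SS n"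
proof (induction n)
  case 0
  then show ?case by (simp add: SS0 ff0)
next
  case (Suc n)
  then show ?case using S_step[of n] by simp
qed

lemma PP_le: "PP n \<le> 1"
proof (induction n)
  case 0 then show ?case by (simp add: PP0)
next
  case (Suc n) then show ?case using P_step[of n] ff_nonneg[of "Suc n"] by simp
qed

lemma psum_le: "(\<Sum>m<Suc n. ff m * lam^m) \<le> 1"
  using sumS[of n] SS_nonneg[of n] q_pos[OF iN jN ij k] by simp

lemma SS_le: "SS n \<le> 1"
proof -
  have "0 \<le> (\<Sum>m<Suc n. ff m * lam^m)" using ff_nonneg lam by (intro sum_nonneg) auto
  then show ?thesis using sumS[of n] q_pos[OF iN jN ij k] by simp
qed

lemma QQ_le_SS: "QQ n \<le> SS n"
  unfolding QQ_def SS_def Sg_def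
proof (intro sum_mono)
  fix ss assume ss: "ss \<in> VV n"
  note tb = term_bounds[OF ss]
  have "(lam^n * H (W ss))^2 \<le> lam^n * H (W ss)"
    using tb by (simp add: power2_eq_square mult_left_le_one_le)
  then show "(if nh n ss then pp ss * (lam^n * H (W ss))^2 else 0) \<le> (if nh n ss then pp ss * (lam^n * H (W ss)) else 0)"
    using tb by (simp add: mult_left_mono)
qed

lemma tele: "kappa * (\<Sum>m<n. QQ m) \<le> QQ n + (\<Sum>m<Suc n. ff m * (lam^m)^2)"
proof (induction n)
  case 0
  then show ?case using QQ_nonneg[of 0] by (simp add: ff0)
next
  case (Suc n)
  have "kappa * (\<Sum>m<Suc n. QQ m) = kappa * (\<Sum>m<n. QQ m) + kappa * QQ n" by (simp add: algebra_simps)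
  also have "\<dots> \<le> (1 + kappa) * QQ n + (\<Sum>m<Suc n. ff m * (lam^m)^2)" using Suc.IH by (simp add: algebra_simps)
  also have "\<dots> \<le> QQ (Suc n) + ff (Suc n) * (lam^(Suc n))^2 + (\<Sum>m<Suc n. ff m * (lam^m)^2)"
    using Q_step[of n] by simp
  finally show ?case by simp
qed

lemma QQ_partial: "(\<Sum>m<n. QQ m) \<le> 2 / kappa"
proof -
  have "(\<Sum>m<Suc n. ff m * (lam^m)^2) \<le> (\<Sum>m<Suc n. ff m * lam^m)"
  proof (intro sum_mono mult_left_mono)
    fix m
    have "0 \<le> lam^m" "lam^m \<le> 1" using lam by (auto intro: power_le_one)
    then show "(lam^m)^2 \<le> lam^m" by (simp add: power2_eq_square mult_left_le_one_le)
    show "0 \<le> ff m" by (rule ff_nonneg)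
  qed
  also have "\<dots> \<le> 1" by (rule psum_le)
  finally have "kappa * (\<Sum>m<n. QQ m) \<le> 2"
    using tele[of n] QQ_le_SS[of n] SS_le[of n] by linarith
  then show ?thesis using kappa_pos by (simp add: field_simps)
qed

lemma QQ_lim: "QQ \<longlonglongrightarrow> 0"
  by (rule summable_LIMSEQ_zero, rule summableI_nonneg_bounded[OF QQ_nonneg QQ_partial])

lemma SS_bound: "0 < e \<Longrightarrow> SS n \<le> e + QQ n / e"
proof -
  assume e: "0 < e"
  have "SS n \<le> (\<Sum>ss\<in>VV n. if nh n ss then pp ss * (e + (lam^n * H (W ss))^2 / e) else 0)"
    unfolding SS_def Sg_def
  proof (intro sum_mono)
    fix ss assume ss: "ss \<in> VV n"
    note tb = term_bounds[OF ss]
    define b where "b = lam^n * H (W ss)"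
    have "b \<le> e + b^2 / e"
    proof -
      have h1: "0 \<le> b * e" using tb e unfolding b_def by simp
      have h2: "0 \<le> (b - e) * (b - e)" by simp
      have h3: "(b - e) * (b - e) = b * b - 2 * (b * e) + e * e" by (simp add: algebra_simps)
      have "b * e \<le> e * e + b * b" using h1 h2 h3 by linarith
      hence "b \<le> (e * e + b * b) / e" using e by (simp add: pos_le_divide_eq)
      also have "(e * e + b * b) / e = e + b^2 / e" using e by (simp add: add_divide_distrib power2_eq_square)
      finally show ?thesis .
    qed
    then show "(if nh n ss then pp ss * (lam^n * H (W ss)) else 0) \<le>
        (if nh n ss then pp ss * (e + (lam^n * H (W ss))^2 / e) else 0)"
      using tb unfolding b_def by (simp add: mult_left_mono)
  qed
  also have "\<dots> = e * PP n + QQ n / e"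
    unfolding PP_def QQ_def Sg_def sum_distrib_left sum_divide_distrib sum.distrib[symmetric]
    by (intro sum.cong refl) (simp add: algebra_simps)
  also have "\<dots> \<le> e + QQ n / e" using PP_le[of n] e by simp
  finally show ?thesis .
qed

lemma SS_lim: "SS \<longlonglongrightarrow> 0"
proof (rule LIMSEQ_I)
  fix r :: real assume r: "0 < r"
  define e where "e = r / 3"
  have e: "0 < e" using r by (simp add: e_def)
  obtain no where no: "\<forall>n\<ge>no. norm (QQ n - 0) < e * e" using LIMSEQ_D[OF QQ_lim, of "e * e"] e by auto
  have "norm (SS n - 0) < r" if "n \<ge> no" for n
  proof -
    have "QQ n < e * e" using no that by auto
    hence "QQ n / e < e" using e by (simp add: field_simps)
    then show ?thesis using SS_bound[OF e, of n] SS_nonneg[of n] unfolding e_def by simp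
  qed
  then show "\<exists>no. \<forall>n\<ge>no. norm (SS n - 0) < r" by blast
qed

lemma final: "q i j k = R_gf N p i j k lam"
proof -
  have "(\<lambda>n. (\<Sum>m<Suc n. ff m * lam^m)) \<longlonglongrightarrow> q i j k"
  proof -
    have "(\<lambda>n. q i j k - SS n) \<longlonglongrightarrow> q i j k - 0" by (intro tendsto_intros SS_lim)
    moreover have "(\<lambda>n. q i j k - SS n) = (\<lambda>n. (\<Sum>m<Suc n. ff m * lam^m))"
      using sumS by (auto simp: fun_eq_iff algebra_simps)
    ultimately show ?thesis by simp
  qed
  hence "(\<lambda>n. ff n * lam^n) sums q i j k"
    unfolding sums_def by (rule LIMSEQ_imp_Suc)
  hence "(\<Sum>n. ff n * lam^n) = q i j k" by (rule sums_unique[symmetric])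
  then show ?thesis unfolding R_gf_def unit_arrow_def gen_arrow_def by simp
qed

end

theorem proposition5p6:
  fixes N :: nat and p q :: "nat \<Rightarrow> nat \<Rightarrow> int \<Rightarrow> real" and lam :: real
  assumes N3: "N \<ge> 3"
    and p_pos: "\<And>i j k. i \<in> {1..N} \<Longrightarrow> j \<in> {1..N} \<Longrightarrow> i \<noteq> j \<Longrightarrow> k \<in> {-1, 1} \<Longrightarrow>
                  0 < p i j k \<and> p i j k < 1"
    and p_sum: "\<And>i. i \<in> {1..N} \<Longrightarrow> (\<Sum>j\<in>{1..N} - {i}. \<Sum>k\<in>{-1, 1}. p i j k) = 1"
    and lam: "0 \<le> lam" "lam \<le> 1"
    and q_pos: "\<And>i j k. i \<in> {1..N} \<Longrightarrow> j \<in> {1..N} \<Longrightarrow> i \<noteq> j \<Longrightarrow> k \<in> {-1, 1} \<Longrightarrow>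
                  0 < q i j k \<and> q i j k < 1"
    and q_eq: "\<And>i j k. i \<in> {1..N} \<Longrightarrow> j \<in> {1..N} \<Longrightarrow> i \<noteq> j \<Longrightarrow> k \<in> {-1, 1} \<Longrightarrow>
                  q i j k = lam * (p i j k
                     + (\<Sum>m\<in>{1..N} - {i, j}. p i m k * q m j k)
                     + (\<Sum>m\<in>{1..N} - {i}. p i m (-k) * q m i (-k) * q i j k))"
  shows "\<forall>i\<in>{1..N}. \<forall>j\<in>{1..N}. \<forall>k\<in>{-1, 1::int}. i \<noteq> j \<longrightarrow> q i j k = R_gf N p i j k lam"
  proof (intro ballI impI)
  fix a b c assume a: "a \<in> {1..N}" and b: "b \<in> {1..N}" and c: "c \<in> {-1, 1::int}" and ab: "a \<noteq> b"
  interpret qsetup N p q lam a b c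
    using N3 p_pos p_sum lam q_pos q_eq a b ab c by unfold_locales auto
  show "q a b c = R_gf N p a b c lam" by (rule final)
qed

end
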